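(* Let $r>1$ and let $k,\ell,m$ be positive integers. Choose $x_0$ uniformly at random from the vertex set of the $(k,\ell,m)$-superstar and run the Moran process with fitness $r$ on it with initial mutant $x_0$. Then the extinction probability is at least $k/(2r(m+k))$.
   Context: Moran process: given a directed graph $G$ and fitness $r$, one vertex $x_0$ is a mutant, the rest non-mutants. At each step a vertex $v$ is chosen with probability proportional to fitness (mutants $r$, non-mutants $1$), an out-neighbour $w$ of $v$ is chosen uniformly at random and the state of $v$ is copied to $w$. Extinction: eventually no vertex is a mutant. The $(k,\ell,m)$-superstar has vertex set the disjoint union of reservoirs $R_1,\dots,R_\ell$ of size $m$, vertices $v_{i,j}$ ($i\in[\ell]$, $j\in[k]$), and a centre $v^*$; its edges are, for each $i\in[\ell]$: from $v^*$ to every vertex of $R_i$, from every vertex of $R_i$ to $v_{i,1}$, from $v_{i,j}$ to $v_{i,j+1}$ for $j\in[k-1]$, and from $v_{i,k}$ to $v^*$. *)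

theory Defs
  imports Complex_Main
begin

text \<open>A directed graph is given by a finite vertex set V and an out-neighbour
function out. A state of the Moran process is the set S of mutant vertices.\<close>

definition fitness :: "real \<Rightarrow> 'a set \<Rightarrow> 'a \<Rightarrow> real" where
  "fitness r S v = (if v \<in> S then r else 1)"

definition total_fitness :: "'a set \<Rightarrow> real \<Rightarrow> 'a set \<Rightarrow> real" where
  "total_fitness V r S = (\<Sum>v\<in>V. fitness r S v)"

definition moran_update :: "'a set \<Rightarrow> 'a \<Rightarrow> 'a \<Rightarrow> 'a set" where
  "moran_update S v w = (if v \<in> S then insert w S else S - {w})"

text \<open>extinct_by V out r n S: probability that, starting from mutant set S,
  after n steps of the Moran process there are no mutants (law of total
  probability over the first step: v chosen with probability proportional to
  fitness, w uniform among the out-neighbours of v).\<close>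
fun extinct_by :: "'a set \<Rightarrow> ('a \<Rightarrow> 'a set) \<Rightarrow> real \<Rightarrow> nat \<Rightarrow> 'a set \<Rightarrow> real" where
  "extinct_by V out r 0 S = (if S = {} then 1 else 0)"
| "extinct_by V out r (Suc n) S =
     (\<Sum>v\<in>V. \<Sum>w\<in>out v.
        (fitness r S v / total_fitness V r S) * (1 / real (card (out v)))
          * extinct_by V out r n (moran_update S v w))"

text \<open>Since the empty state is absorbing, the events "no mutant at time n" are
  increasing in n; the probability of eventual extinction is their supremum.\<close>
definition extinction_prob :: "'a set \<Rightarrow> ('a \<Rightarrow> 'a set) \<Rightarrow> real \<Rightarrow> 'a set \<Rightarrow> real" where
  "extinction_prob V out r S = (SUP n. extinct_by V out r n S)"

datatype svert = Res nat nat | Path nat nat | Centre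
  \<comment> \<open>Res i j: j-th vertex of reservoir R_i; Path i j: v_{i,j}; Centre: v^*\<close>

definition superstar_V :: "nat \<Rightarrow> nat \<Rightarrow> nat \<Rightarrow> svert set" where
  "superstar_V k l m =
     {Res i j | i j. i \<in> {1..l} \<and> j \<in> {1..m}} \<union>
     {Path i j | i j. i \<in> {1..l} \<and> j \<in> {1..k}} \<union> {Centre}"

fun superstar_out :: "nat \<Rightarrow> nat \<Rightarrow> nat \<Rightarrow> svert \<Rightarrow> svert set" where
  "superstar_out k l m Centre = {Res i j | i j. i \<in> {1..l} \<and> j \<in> {1..m}}"
| "superstar_out k l m (Res i j) = {Path i 1}"
| "superstar_out k l m (Path i j) = (if j < k then {Path i (j + 1)} else {Centre})"

end

theory Submission
  imports Defs
begin

definition good :: "'a set \<Rightarrow> ('a \<Rightarrow> 'a set) \<Rightarrow> real \<Rightarrow> bool" where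
  "good V out r \<longleftrightarrow> finite V \<and> V \<noteq> {} \<and> r > 0 \<and> (\<forall>v\<in>V. finite (out v) \<and> out v \<noteq> {})"

lemma tf_pos:
  assumes "good V out r" shows "total_fitness V r S > 0"
proof -
  have "\<forall>v\<in>V. fitness r S v > 0" using assms by (auto simp: good_def fitness_def)
  thus ?thesis using assms unfolding good_def total_fitness_def
    by (intro sum_pos) auto
qed

lemma ext_bounds:
  assumes g: "good V out r"
  shows "0 \<le> extinct_by V out r n S \<and> extinct_by V out r n S \<le> 1"
proof (induction n arbitrary: S)
  case 0 then show ?case by simp
next
  case (Suc n)
  define W where "W = total_fitness V r S"
  have W: "W > 0" using tf_pos[OF g] W_def by simp
  have fp: "fitness r S v > 0" for v using g by (auto simp: good_def fitness_def)
  have nn: "0 \<le> extinct_by V out r (Suc n) S"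
    using Suc W fp unfolding extinct_by.simps by (intro sum_nonneg mult_nonneg_nonneg) (auto simp: less_imp_le W_def)
  have "extinct_by V out r (Suc n) S \<le> (\<Sum>v\<in>V. \<Sum>w\<in>out v. (fitness r S v / W) * (1 / real (card (out v))))"
    unfolding extinct_by.simps W_def[symmetric]
    apply (intro sum_mono)
    using Suc W fp by (intro mult_left_le) (auto simp: less_imp_le)
  also have "\<dots> = (\<Sum>v\<in>V. fitness r S v / W)"
  proof (rule sum.cong[OF refl])
    fix v assume "v \<in> V"
    then have "finite (out v)" "out v \<noteq> {}" using g by (auto simp: good_def)
    then have "card (out v) > 0" by (simp add: card_gt_0_iff)
    then show "(\<Sum>w\<in>out v. fitness r S v / W * (1 / real (card (out v)))) = fitness r S v / W"
      by simp
  qed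
  also have "\<dots> = 1" using W unfolding W_def total_fitness_def by (simp add: sum_divide_distrib[symmetric])
  finally show ?case using nn by simp
qed

lemma ext_empty:
  assumes g: "good V out r"
  shows "extinct_by V out r n {} = 1"
proof (induction n)
  case 0 then show ?case by simp
next
  case (Suc n)
  have upd: "moran_update {} v w = {}" for v w by (simp add: moran_update_def)
  have "extinct_by V out r (Suc n) {} = (\<Sum>v\<in>V. \<Sum>w\<in>out v. (fitness r {} v / total_fitness V r {}) * (1 / real (card (out v))))"
    by (simp only: extinct_by.simps upd Suc mult_1_right)
  also have "\<dots> = (\<Sum>v\<in>V. 1 / real (card V))"
  proof (rule sum.cong[OF refl])
    fix v assume "v \<in> V"
    then have "finite (out v)" "out v \<noteq> {}" using g by (auto simp: good_def)
    then have "card (out v) > 0" by (simp add: card_gt_0_iff)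
    then show "(\<Sum>w\<in>out v. (fitness r {} v / total_fitness V r {}) * (1 / real (card (out v)))) = 1 / real (card V)"
      by (simp add: fitness_def total_fitness_def)
  qed
  also have "\<dots> = 1" using g by (simp add: good_def)
  finally show ?case .
qed

lemma tf_single:
  assumes "finite V" "x \<in> V"
  shows "total_fitness V r {x} = r + (real (card V) - 1)"
proof -
  have "total_fitness V r {x} = fitness r {x} x + (\<Sum>v\<in>V-{x}. fitness r {x} v)"
    unfolding total_fitness_def using assms by (simp add: sum.remove)
  also have "(\<Sum>v\<in>V-{x}. fitness r {x} v) = (\<Sum>v\<in>V-{x}. 1)"
    by (rule sum.cong) (auto simp: fitness_def)
  moreover have "card V \<ge> 1" using assms by (metis One_nat_def Suc_leI card_gt_0_iff empty_iff)
  ultimately show ?thesis using assms by (simp add: fitness_def of_nat_diff card_Diff_singleton)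
qed

lemma step:
  assumes g: "good V out r" and x: "x \<in> V" and u: "u \<in> V" "u \<noteq> x" "out u = {x}"
  defines "W \<equiv> r + (real (card V) - 1)"
  shows "extinct_by V out r (Suc n) {x} \<ge> 1 / W + (real (card V) - 2) / W * extinct_by V out r n {x}"
proof -
  let ?P = "extinct_by V out r n {x}"
  have fin: "finite V" using g by (simp add: good_def)
  have tf: "total_fitness V r {x} = W" using tf_single[OF fin x] W_def by simp
  have Wp: "W > 0" using tf tf_pos[OF g, of "{x}"] by simp
  define h where "h v = (\<Sum>w\<in>out v. (fitness r {x} v / W) * (1 / real (card (out v)))
          * extinct_by V out r n (moran_update {x} v w))" for v
  have eq: "extinct_by V out r (Suc n) {x} = (\<Sum>v\<in>V. h v)"
    by (simp only: extinct_by.simps tf h_def)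
  have bnd: "0 \<le> extinct_by V out r n S \<and> extinct_by V out r n S \<le> 1" for S
    using ext_bounds[OF g] .
  have rp: "r > 0" using g by (simp add: good_def)
  have hx: "h x \<ge> 0" unfolding h_def using Wp rp bnd
    by (intro sum_nonneg mult_nonneg_nonneg) (auto simp: fitness_def)
  have hu: "h u = 1 / W" unfolding h_def using u
    by (simp add: fitness_def moran_update_def ext_empty[OF g])
  have ho: "h v \<ge> ?P / W" if "v \<in> V" "v \<noteq> x" for v
  proof -
    have fv: "finite (out v)" "out v \<noteq> {}" using g that by (auto simp: good_def)
    then have cp: "card (out v) > 0" by (simp add: card_gt_0_iff)
    have "h v \<ge> (\<Sum>w\<in>out v. (1 / W) * (1 / real (card (out v))) * ?P)"
      unfolding h_def
    proof (rule sum_mono)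
      fix w assume "w \<in> out v"
      have "extinct_by V out r n (moran_update {x} v w) \<ge> ?P"
      proof (cases "w = x")
        case True
        then have "moran_update {x} v w = {}" using that by (simp add: moran_update_def)
        then show ?thesis using bnd ext_empty[OF g] by simp
      next
        case False
        then have "moran_update {x} v w = {x}" using that by (auto simp: moran_update_def)
        then show ?thesis by simp
      qed
      then show "(1 / W) * (1 / real (card (out v))) * ?P \<le> (fitness r {x} v / W) * (1 / real (card (out v)))
          * extinct_by V out r n (moran_update {x} v w)"
        using that Wp cp by (simp add: fitness_def divide_right_mono)
    qed
    also have "(\<Sum>w\<in>out v. (1 / W) * (1 / real (card (out v))) * ?P) = ?P / W"
      using cp by simp
    finally show ?thesis .
  qed
  have s1: "(\<Sum>v\<in>V. h v) = h x + (h u + (\<Sum>v\<in>V-{x}-{u}. h v))"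
    using fin x u by (simp add: sum.remove)
  have s2: "(\<Sum>v\<in>V-{x}-{u}. h v) \<ge> (\<Sum>v\<in>V-{x}-{u}. ?P / W)"
    by (rule sum_mono) (use ho in auto)
  have s3: "(\<Sum>v\<in>V-{x}-{u}. ?P / W) = (real (card V) - 2) * (?P / W)"
  proof -
    have "card {x,u} \<le> card V" using fin x u by (intro card_mono) auto
    then have "card V \<ge> 2" using u by simp
    then show ?thesis using fin x u by (simp add: card_Diff_subset of_nat_diff)
  qed
  have "extinct_by V out r (Suc n) {x} \<ge> 1 / W + (real (card V) - 2) * (?P / W)"
    using eq s1 s2 s3 hx hu by linarith
  then show ?thesis by simp
qed

lemma sup_ge:
  fixes f :: "nat \<Rightarrow> real"
  assumes "\<And>n. f n \<le> 1" "\<And>n. f n \<ge> q * (1 - c ^ n)" "0 \<le> c" "c < 1"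
  shows "q \<le> (SUP n. f n)"
proof -
  have lim: "(\<lambda>n. q * (1 - c ^ n)) \<longlonglongrightarrow> q * (1 - 0)"
    using assms by (intro tendsto_intros LIMSEQ_power_zero) auto
  have bdd: "bdd_above (range f)" using assms(1) by (intro bdd_aboveI2) auto
  have "q * (1 - c ^ n) \<le> (SUP n. f n)" for n
    using assms(2)[of n] cSUP_upper[OF UNIV_I bdd, of n] by linarith
  then show ?thesis using LIMSEQ_le_const2[OF lim] by auto
qed

lemma ext_prob_ge:
  assumes g: "good V out r" and x: "x \<in> V" and u: "u \<in> V" "u \<noteq> x" "out u = {x}"
  shows "extinction_prob V out r {x} \<ge> 1 / (1 + r)"
proof -
  define N where "N = real (card V)"
  define W where "W = r + (N - 1)"
  define c where "c = (N - 2) / W"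
  define q where "q = 1 / (1 + r)"
  have fin: "finite V" using g by (simp add: good_def)
  have rp: "r > 0" using g by (simp add: good_def)
  have "card {x,u} \<le> card V" using fin x u by (intro card_mono) auto
  then have N2: "N \<ge> 2" using u by (simp add: N_def)
  have Wp: "W > 0" using N2 rp W_def by simp
  have c0: "c \<ge> 0" using N2 Wp c_def by simp
  have c1: "c < 1" using Wp rp c_def W_def by (simp add: divide_less_eq)
  have st: "extinct_by V out r (Suc n) {x} \<ge> 1 / W + c * extinct_by V out r n {x}" for n
    using step[OF g x u, of n] by (simp add: W_def c_def N_def)
  have key: "extinct_by V out r n {x} \<ge> q * (1 - c ^ n)" for n
  proof (induction n)
    case 0 then show ?case using x by simp
  next
    case (Suc n)
    have "q * (1 - c ^ Suc n) = 1 / W + c * (q * (1 - c ^ n))"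
    proof -
      have "1 - c = (1 + r) / W" using Wp by (simp add: c_def W_def field_simps)
      then have "q * (1 - c) = 1 / W" using rp by (simp add: q_def)
      then have "1 / W = q - q * c" by (simp add: algebra_simps)
      then show ?thesis by (simp add: algebra_simps)
    qed
    also have "\<dots> \<le> 1 / W + c * extinct_by V out r n {x}"
      using Suc c0 by (simp add: mult_left_mono)
    also have "\<dots> \<le> extinct_by V out r (Suc n) {x}" using st .
    finally show ?case .
  qed
  show ?thesis unfolding extinction_prob_def q_def[symmetric]
    by (rule sup_ge[OF _ key c0 c1]) (use ext_bounds[OF g] in auto)
qed

lemma ep_nonneg:
  assumes g: "good V out r"
  shows "extinction_prob V out r S \<ge> 0"
  unfolding extinction_prob_def
  by (rule sup_ge[of _ 0 0, simplified]) (use ext_bounds[OF g] in auto)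

lemma V_eq: "superstar_V k l m = (\<lambda>(i,j). Res i j) ` ({1..l}\<times>{1..m}) \<union> (\<lambda>(i,j). Path i j) ` ({1..l}\<times>{1..k}) \<union> {Centre}"
  unfolding superstar_V_def by auto

lemma out_C: "superstar_out k l m Centre = (\<lambda>(i,j). Res i j) ` ({1..l}\<times>{1..m})"
  by auto

theorem lemma4p2:
  fixes r :: real and k l m :: nat
  assumes "r > 1" and "k > 0" and "l > 0" and "m > 0"
  shows "(\<Sum>x\<in>superstar_V k l m.
            extinction_prob (superstar_V k l m) (superstar_out k l m) r {x})
           / real (card (superstar_V k l m))
         \<ge> real k / (2 * r * (real m + real k))"
proof -
  let ?V = "superstar_V k l m" and ?out = "superstar_out k l m"
  define RS where "RS = (\<lambda>(i,j). Res i j) ` ({1..l}\<times>{1..m})"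
  define PS where "PS = (\<lambda>(i,j). Path i j) ` ({1..l}\<times>{1..k})"
  have V: "?V = RS \<union> PS \<union> {Centre}" unfolding RS_def PS_def by (rule V_eq)
  have finV: "finite ?V" unfolding V RS_def PS_def by simp
  have RSne: "RS \<noteq> {}" using assms unfolding RS_def by auto
  have g: "good ?V ?out r"
    unfolding good_def
  proof (intro conjI ballI)
    fix v assume "v \<in> ?V"
    have oc: "?out Centre = RS" unfolding RS_def by (rule out_C)
    have fRS: "finite RS" unfolding RS_def by simp
    show "finite (?out v)"
    proof (cases v)
      case Centre then show ?thesis using oc fRS by metis
    qed auto
    show "?out v \<noteq> {}"
    proof (cases v)
      case Centre then show ?thesis using oc RSne by metis
    qed auto
  qed (use finV assms V in auto)
  have inP: "Path i j \<in> ?V" if "i \<in> {1..l}" "j \<in> {1..k}" for i j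
    unfolding V PS_def using that by (intro UnI1 UnI2 image_eqI[of _ _ "(i,j)"]) auto
  have inR: "Res i j \<in> ?V" if "i \<in> {1..l}" "j \<in> {1..m}" for i j
    unfolding V RS_def using that by (intro UnI1 image_eqI[of _ _ "(i,j)"]) auto
  have inC: "Centre \<in> ?V" unfolding V by simp
  have ep: "extinction_prob ?V ?out r {x} \<ge> 1 / (1 + r)" if xin: "x \<in> PS \<union> {Centre}" for x
  proof (cases "x = Centre")
    case True
    show ?thesis
      by (rule ext_prob_ge[OF g, of x "Path 1 k"]) (use True assms inC inP in auto)
  next
    case False
    then obtain i j where ij: "x = Path i j" "i \<in> {1..l}" "j \<in> {1..k}" using xin False unfolding PS_def by auto
    show ?thesis
    proof (cases "j = 1")
      case True
      show ?thesis
        by (rule ext_prob_ge[OF g, of x "Res i 1"]) (use True ij assms inR inP in auto)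
    next
      case False
      have "j - 1 \<in> {1..k}" using False ij by auto
      then have pj: "Path i (j - 1) \<in> ?V" using ij inP by blast
      show ?thesis
        by (rule ext_prob_ge[OF g, of x "Path i (j - 1)"]) (use False ij assms pj inP[of i j] in auto)
    qed
  qed
  have cPS: "card PS = l * k" unfolding PS_def
    by (subst card_image) (auto simp: inj_on_def)
  have "Centre \<notin> PS" "finite PS" unfolding PS_def by auto
  then have cPSC: "card (PS \<union> {Centre}) = l * k + 1" using cPS by simp
  have "(\<Sum>x\<in>PS \<union> {Centre}. 1 / (1 + r)) \<le> (\<Sum>x\<in>PS \<union> {Centre}. extinction_prob ?V ?out r {x})"
    by (rule sum_mono) (use ep in auto)
  also have "\<dots> \<le> (\<Sum>x\<in>?V. extinction_prob ?V ?out r {x})"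
    by (rule sum_mono2[OF finV]) (use V ep_nonneg[OF g] in auto)
  finally have S: "(\<Sum>x\<in>?V. extinction_prob ?V ?out r {x}) \<ge> (real l * real k + 1) / (1 + r)"
    using cPSC by (simp add: add.commute)
  have "card ?V \<le> card (RS \<union> PS) + card {Centre}" unfolding V by (rule card_Un_le)
  also have "card (RS \<union> PS) \<le> card RS + card PS" by (rule card_Un_le)
  also have "card RS \<le> card ({1..l}\<times>{1..m})" unfolding RS_def by (rule card_image_le) simp
  finally have cV: "card ?V \<le> l * m + l * k + 1" using cPS by simp
  have Np: "card ?V > 0" using finV V by (auto simp: card_gt_0_iff)
  define N where "N = real (card ?V)"
  define S where "S = (\<Sum>x\<in>?V. extinction_prob ?V ?out r {x})"
  have N1: "N \<le> real l * real m + real l * real k + 1" using cV unfolding N_def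
    by (metis of_nat_1 of_nat_add of_nat_le_iff of_nat_mult)
  have N0: "N > 0" using Np N_def by simp
  have S1: "S \<ge> (real l * real k + 1) / (1 + r)" using S S_def by simp
  have r0: "r > 0" using assms by simp
  have "real k / (2 * r * (real m + real k)) \<le> (real l * real k + 1) / ((1 + r) * N)"
  proof -
    have mk: "real m + real k > 0" using assms by simp
    have "real k * ((1 + r) * N) \<le> real k * ((1 + r) * (real l * real m + real l * real k + 1))"
      using N1 r0 by (intro mult_left_mono) auto
    also have "\<dots> \<le> (real l * real k + 1) * (2 * r * (real m + real k))"
    proof -
      have a: "real k * (real l * real m + real l * real k + 1) \<le> (real l * real k + 1) * (real m + real k)"
        by (simp add: algebra_simps)
      have "real k * ((1 + r) * (real l * real m + real l * real k + 1)) = (1 + r) * (real k * (real l * real m + real l * real k + 1))"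
        by (simp add: algebra_simps)
      also have "\<dots> \<le> (2 * r) * ((real l * real k + 1) * (real m + real k))"
        using a assms by (intro mult_mono[of "1 + r" "2 * r"]) auto
      finally show ?thesis by (simp add: algebra_simps)
    qed
    finally show ?thesis using mk N0 r0 by (simp add: divide_simps)
  qed
  also have "\<dots> \<le> S / N"
    using S1 N0 r0 by (simp add: divide_simps mult.commute)
  finally show ?thesis unfolding S_def N_def .
qed

end
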